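(* Consider the following model of a single group $s\in\{0,1\}$. Let $f_{q,s},f_{u,s}$ be probability densities on $\mathbb{R}$ with distribution functions $F_{q,s},F_{u,s}$, satisfying the monotone likelihood ratio property: $f_{q,s}(\theta)/f_{u,s}(\theta)$ is strictly increasing in $\theta$. Let $v_q>0$, $v_u>0$, $\omega>0$, $r=v_q/v_u$, $\underline{c}<\bar{c}$, and put $\phi_s(\theta)=f_{u,s}(\theta)/f_{q,s}(\theta)$, $\tilde c_s(\theta)=\omega\,[F_{u,s}(\theta)-F_{q,s}(\theta)]$, $G(c)=\min\!\left(1,\frac{c-\underline{c}}{\bar c-\underline{c}}\right)$. Call a pair $(\tilde\theta_s,\pi_s)$ an equilibrium for group $s$ if $$\pi_s=\frac{\phi_s(\tilde\theta_s)}{r+\phi_s(\tilde\theta_s)}\quad\text{and}\quad \pi_s=G(\tilde c_s(\tilde\theta_s)).$$ Define the firm's welfare $\mathrm{FW}_s(\theta,\pi)=\pi(1-F_{q,s}(\theta))v_q-(1-\pi)(1-F_{u,s}(\theta))v_u$, the applicants' welfare $$\mathrm{AW}_s(\theta,\pi)=\omega\Bigl(\pi(1-F_{q,s}(\theta))+(1-\pi)(1-F_{u,s}(\theta))\Bigr)+\int_{\underline{c}}^{(1-\pi)\underline{c}+\pi\bar c}c\,\mathrm{d}c,$$ and the social welfare $\mathrm{SW}_s(\theta,\pi)=\mathrm{FW}_s(\theta,\pi)+\mathrm{AW}_s(\theta,\pi)$. Suppose $(\tilde\theta_s^{(1)},\pi_s^{(1)})$ and $(\tilde\theta_s^{(2)},\pi_s^{(2)})$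 are two equilibria for group $s$ with $\pi_s^{(1)}>\pi_s^{(2)}$, and let $\mathrm{SW}_s^{(i)}=\mathrm{SW}_s(\tilde\theta_s^{(i)},\pi_s^{(i)})$. Then $\mathrm{SW}_s^{(1)}>\mathrm{SW}_s^{(2)}$.
   Context: Game-theoretic model: applicants of group $s$ each draw a cost $c$ uniformly on $[\underline c,\bar c]$ and choose effort $e\in\{q,u\}$ (qualified/unqualified); a classifier score $\theta$ has density $f_{e,s}$ given $e,s$; the firm accepts applicants with $\theta>\tilde\theta_s$, earning $v_q$ per accepted qualified and losing $v_u$ per accepted unqualified applicant; accepted applicants receive $\omega$. $\pi_s$ is the fraction of qualified applicants in group $s$. The first equilibrium equation is the firm's optimal threshold condition (accept iff $\mathbb{P}(e=q\mid\theta,s)v_q-(1-\mathbb{P}(e=q\mid\theta,s))v_u\ge 0$), the second is the applicants' best response (invest iff $c<\tilde c_s(\tilde\theta_s)$). *)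

theory Defs
  imports "HOL-Analysis.Analysis"
begin

definition prob_density :: "(real \<Rightarrow> real) \<Rightarrow> bool" where
  "prob_density f \<longleftrightarrow> f \<in> borel_measurable lborel \<and> (\<forall>x. 0 \<le> f x)
     \<and> integrable lborel f \<and> (\<integral>x. f x \<partial>lborel) = 1"

definition cdf_of :: "(real \<Rightarrow> real) \<Rightarrow> real \<Rightarrow> real" where
  "cdf_of f \<theta> = (LINT x:{..\<theta>}|lborel. f x)"

definition phi :: "(real \<Rightarrow> real) \<Rightarrow> (real \<Rightarrow> real) \<Rightarrow> real \<Rightarrow> real" where
  "phi fq fu \<theta> = fu \<theta> / fq \<theta>"

definition ctilde :: "real \<Rightarrow> (real \<Rightarrow> real) \<Rightarrow> (real \<Rightarrow> real) \<Rightarrow> real \<Rightarrow> real" where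
  "ctilde \<omega> fq fu \<theta> = \<omega> * (cdf_of fu \<theta> - cdf_of fq \<theta>)"

definition Gcost :: "real \<Rightarrow> real \<Rightarrow> real \<Rightarrow> real" where
  "Gcost cl ch c = min 1 ((c - cl) / (ch - cl))"

definition is_equilibrium ::
  "real \<Rightarrow> real \<Rightarrow> real \<Rightarrow> real \<Rightarrow> real \<Rightarrow> (real \<Rightarrow> real) \<Rightarrow> (real \<Rightarrow> real)
    \<Rightarrow> real \<Rightarrow> real \<Rightarrow> bool" where
  "is_equilibrium vq vu \<omega> cl ch fq fu \<theta> \<pi> \<longleftrightarrow>
     \<pi> = phi fq fu \<theta> / (vq / vu + phi fq fu \<theta>) \<and>
     \<pi> = Gcost cl ch (ctilde \<omega> fq fu \<theta>)"

definition FW :: "real \<Rightarrow> real \<Rightarrow> (real \<Rightarrow> real) \<Rightarrow> (real \<Rightarrow> real) \<Rightarrow> real \<Rightarrow> real \<Rightarrow> real" where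
  "FW vq vu fq fu \<theta> \<pi> = \<pi> * (1 - cdf_of fq \<theta>) * vq - (1 - \<pi>) * (1 - cdf_of fu \<theta>) * vu"

definition AW :: "real \<Rightarrow> real \<Rightarrow> real \<Rightarrow> (real \<Rightarrow> real) \<Rightarrow> (real \<Rightarrow> real) \<Rightarrow> real \<Rightarrow> real \<Rightarrow> real" where
  "AW \<omega> cl ch fq fu \<theta> \<pi> =
     \<omega> * (\<pi> * (1 - cdf_of fq \<theta>) + (1 - \<pi>) * (1 - cdf_of fu \<theta>))
     + integral {cl .. (1 - \<pi>) * cl + \<pi> * ch} (\<lambda>c. c)"

definition SW :: "real \<Rightarrow> real \<Rightarrow> real \<Rightarrow> real \<Rightarrow> real \<Rightarrow> (real \<Rightarrow> real) \<Rightarrow> (real \<Rightarrow> real)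
    \<Rightarrow> real \<Rightarrow> real \<Rightarrow> real" where
  "SW vq vu \<omega> cl ch fq fu \<theta> \<pi> = FW vq vu fq fu \<theta> \<pi> + AW \<omega> cl ch fq fu \<theta> \<pi>"

end

theory Submission
  imports Defs
begin

lemma cdf_eq: "cdf_of f t = (LINT x|lborel. f x * indicator {..t} x)"
  unfolding cdf_of_def set_lebesgue_integral_def by (simp add: mult.commute)

lemma int_ind: "prob_density f \<Longrightarrow> integrable lborel (\<lambda>x. f x * indicator A x)"
  if "A \<in> sets lborel" for A
  using that unfolding prob_density_def by (intro integrable_real_mult_indicator) auto

lemma lin_cdf:
  assumes "prob_density f" "prob_density g"
  shows "a * cdf_of f t + b * cdf_of g t = (LINT x|lborel. (a * f x + b * g x) * indicator {..t} x)"
proof -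
  have i1: "integrable lborel (\<lambda>x. a * (f x * indicator {..t} x))"
    using int_ind[OF _ assms(1), of "{..t}"] by simp
  have i2: "integrable lborel (\<lambda>x. b * (g x * indicator {..t} x))"
    using int_ind[OF _ assms(2), of "{..t}"] by simp
  have "(LINT x|lborel. (a * f x + b * g x) * indicator {..t} x)
     = (LINT x|lborel. a * (f x * indicator {..t} x) + b * (g x * indicator {..t} x))"
    by (simp add: algebra_simps)
  also have "\<dots> = a * cdf_of f t + b * cdf_of g t"
    using i1 i2 by (simp add: cdf_eq)
  finally show ?thesis by simp
qed

lemma int_lin:
  assumes "prob_density f" "prob_density g"
  shows "integrable lborel (\<lambda>x. (a * f x + b * g x) * indicator {..t} x)"
proof -
  have i1: "integrable lborel (\<lambda>x. a * (f x * indicator {..t} x))"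
    using int_ind[OF _ assms(1), of "{..t}"] by simp
  have i2: "integrable lborel (\<lambda>x. b * (g x * indicator {..t} x))"
    using int_ind[OF _ assms(2), of "{..t}"] by simp
  have "integrable lborel (\<lambda>x. a * (f x * indicator {..t} x) + b * (g x * indicator {..t} x))"
    using i1 i2 by simp
  then show ?thesis by (simp add: algebra_simps)
qed

lemma cdf_bounds:
  assumes "prob_density f"
  shows "0 \<le> cdf_of f t" "cdf_of f t \<le> 1"
proof -
  have nn: "\<And>x. 0 \<le> f x" and i: "integrable lborel f" and one: "(LINT x|lborel. f x) = 1"
    using assms unfolding prob_density_def by auto
  show "0 \<le> cdf_of f t" unfolding cdf_eq
    by (rule Bochner_Integration.integral_nonneg) (auto simp: nn split: split_indicator)
  have "cdf_of f t \<le> (LINT x|lborel. f x)" unfolding cdf_eq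
    by (rule integral_mono[OF int_ind[OF _ assms] i]) (auto simp: nn split: split_indicator)
  then show "cdf_of f t \<le> 1" using one by simp
qed

lemma cdf_mono:
  assumes "prob_density f" "s \<le> t"
  shows "cdf_of f s \<le> cdf_of f t"
proof -
  have nn: "\<And>x. 0 \<le> f x" using assms unfolding prob_density_def by auto
  show ?thesis unfolding cdf_eq
    by (rule integral_mono[OF int_ind[OF _ assms(1)] int_ind[OF _ assms(1)]])
      (use assms(2) in \<open>auto simp: nn split: split_indicator\<close>)
qed

lemma cdf_compl:
  assumes "prob_density f"
  shows "1 - cdf_of f t = (LINT x|lborel. f x * indicator {t<..} x)"
proof -
  have i: "integrable lborel f" and one: "(LINT x|lborel. f x) = 1"
    using assms unfolding prob_density_def by auto
  have "(LINT x|lborel. f x * indicator {t<..} x) = (LINT x|lborel. f x - f x * indicator {..t} x)"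
    by (rule Bochner_Integration.integral_cong) (auto split: split_indicator)
  also have "\<dots> = 1 - cdf_of f t"
    using i int_ind[OF _ assms, of "{..t}"] one by (simp add: cdf_eq)
  finally show ?thesis by simp
qed

lemma fosd:
  assumes dq: "prob_density fq" and du: "prob_density fu"
    and posq: "\<forall>x. 0 < fq x" and posu: "\<forall>x. 0 < fu x"
    and mlr: "strict_mono (\<lambda>\<theta>. fq \<theta> / fu \<theta>)"
  shows "cdf_of fq t \<le> cdf_of fu t"
proof -
  define k where "k = fq t / fu t"
  have le: "fq x \<le> k * fu x" if "x \<le> t" for x
  proof -
    have "fq x / fu x \<le> k" unfolding k_def using strict_mono_less_eq[OF mlr, of x t] that by simp
    then show ?thesis using posu by (simp add: divide_le_eq)
  qed
  have ge: "k * fu x \<le> fq x" if "t < x" for x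
  proof -
    have "k \<le> fq x / fu x" unfolding k_def using strict_mono_less_eq[OF mlr, of t x] that by simp
    then show ?thesis using posu by (simp add: le_divide_eq)
  qed
  have ku: "0 \<le> cdf_of fu t" "cdf_of fu t \<le> 1" using cdf_bounds[OF du] by auto
  show ?thesis
  proof (cases "k \<le> 1")
    case True
    have "cdf_of fq t \<le> (LINT x|lborel. (k * fu x) * indicator {..t} x)" unfolding cdf_eq
      by (rule integral_mono[OF int_ind[OF _ dq]])
        (use int_ind[OF _ du, of "{..t}"] le in \<open>auto simp: mult.assoc split: split_indicator\<close>)
    also have "\<dots> = k * cdf_of fu t" by (simp add: cdf_eq mult.assoc)
    also have "\<dots> \<le> cdf_of fu t" using mult_right_mono[OF True ku(1)] by simp
    finally show ?thesis .
  next
    case False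
    have "(LINT x|lborel. (k * fu x) * indicator {t<..} x) \<le> 1 - cdf_of fq t" unfolding cdf_compl[OF dq]
      by (rule integral_mono[OF _ int_ind[OF _ dq]])
        (use int_ind[OF _ du, of "{t<..}"] ge in \<open>auto simp: mult.assoc split: split_indicator\<close>)
    moreover have "(LINT x|lborel. (k * fu x) * indicator {t<..} x) = k * (1 - cdf_of fu t)"
      by (simp add: cdf_compl[OF du] mult.assoc)
    moreover have "1 - cdf_of fu t \<le> k * (1 - cdf_of fu t)" using False ku
      by (simp add: mult_le_cancel_right1)
    ultimately show ?thesis by linarith
  qed
qed

lemma final_step:
  fixes X1 X2 W1 W2 P1 P2 s1 s2 k :: real
  shows "X2 \<le> X1 \<Longrightarrow> W2 \<le> W1 \<Longrightarrow> P2 \<le> P1 \<Longrightarrow> s2 < s1 \<Longrightarrow>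
    X2 + (W2 + P2) + (s2 - k) / 2 < X1 + (W1 + P1) + (s1 - k) / 2"
proof -
  assume a: "X2 \<le> X1" "W2 \<le> W1" "P2 \<le> P1" "s2 < s1"
  have "(s2 - k) / 2 < (s1 - k) / 2" using a(4) by (simp add: divide_strict_right_mono)
  then show ?thesis using a(1-3) by (meson add_mono add_le_less_mono)
qed

lemma pi_form:
  assumes "vq > 0" "vu > 0" "(a::real) > 0" "b > 0" "p = (b / a) / (vq / vu + b / a)"
  shows "p = b * vu / (vq * a + b * vu)"
  using assms by (simp add: field_simps)

theorem theorem1:
  fixes fq fu :: "real \<Rightarrow> real" and vq vu \<omega> cl ch \<theta>1 \<pi>1 \<theta>2 \<pi>2 :: real
  assumes dq: "prob_density fq" and du: "prob_density fu"
    and posq: "\<forall>x. 0 < fq x" and posu: "\<forall>x. 0 < fu x"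
    and mlr: "strict_mono (\<lambda>\<theta>. fq \<theta> / fu \<theta>)"
    and vq: "vq > 0" and vu: "vu > 0" and om: "\<omega> > 0" and cc: "cl < ch"
    and eq1: "is_equilibrium vq vu \<omega> cl ch fq fu \<theta>1 \<pi>1"
    and eq2: "is_equilibrium vq vu \<omega> cl ch fq fu \<theta>2 \<pi>2"
    and gt: "\<pi>1 > \<pi>2"
  shows "SW vq vu \<omega> cl ch fq fu \<theta>1 \<pi>1 > SW vq vu \<omega> cl ch fq fu \<theta>2 \<pi>2"
proof -
  define a1 b1 a2 b2 where "a1 = fq \<theta>1" "b1 = fu \<theta>1" "a2 = fq \<theta>2" "b2 = fu \<theta>2"
  have pos: "a1 > 0" "b1 > 0" "a2 > 0" "b2 > 0" using posq posu by (auto simp: a1_b1_a2_b2_def)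
  have p1: "\<pi>1 = b1 * vu / (vq * a1 + b1 * vu)"
    by (rule pi_form[OF vq vu pos(1,2)]) (use eq1 in \<open>simp add: is_equilibrium_def phi_def a1_b1_a2_b2_def\<close>)
  have p2: "\<pi>2 = b2 * vu / (vq * a2 + b2 * vu)"
    by (rule pi_form[OF vq vu pos(3,4)]) (use eq2 in \<open>simp add: is_equilibrium_def phi_def a1_b1_a2_b2_def\<close>)
  have D1: "vq * a1 + b1 * vu > 0" "vq * a2 + b2 * vu > 0" using pos vq vu by (auto intro: add_pos_pos)
  have pr1: "0 < \<pi>1" "\<pi>1 < 1"
  proof -
    have d: "vq * a1 + b1 * vu > 0" "b1 * vu > 0" "vq * a1 > 0" using D1 pos vq vu by auto
    show "0 < \<pi>1" unfolding p1 using d by simp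
    show "\<pi>1 < 1" unfolding p1 using d by (simp add: divide_less_eq)
  qed
  have pr2: "0 < \<pi>2" "\<pi>2 < 1"
  proof -
    have d: "vq * a2 + b2 * vu > 0" "b2 * vu > 0" "vq * a2 > 0" using D1 pos vq vu by auto
    show "0 < \<pi>2" unfolding p2 using d by simp
    show "\<pi>2 < 1" unfolding p2 using d by (simp add: divide_less_eq)
  qed
  have "a1 / b1 < a2 / b2"
  proof (rule ccontr)
    assume "\<not> a1 / b1 < a2 / b2"
    then have "a2 * b1 \<le> a1 * b2" using pos by (simp add: field_simps)
    then have "vq * vu * (a2 * b1) \<le> vq * vu * (a1 * b2)"
      using vq vu by simp
    then have "b1 * vu * (vq * a2 + b2 * vu) \<le> b2 * vu * (vq * a1 + b1 * vu)"
      by (simp add: algebra_simps)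
    then have "\<pi>1 \<le> \<pi>2" unfolding p1 p2 using D1 by (simp add: divide_simps)
    then show False using gt by simp
  qed
  then have th: "\<theta>1 < \<theta>2"
    using strict_mono_less_eq[OF mlr, of \<theta>2 \<theta>1] unfolding a1_b1_a2_b2_def by force
  \<comment> \<open>firm optimality\<close>
  define h where "h x = \<pi>1 * vq * fq x + (- ((1 - \<pi>1) * vu)) * fu x" for x
  have hnn: "h x \<ge> 0" if "\<theta>1 < x" for x
  proof -
    have "a1 / b1 < fq x / fu x"
      using strict_mono_less[OF mlr, of \<theta>1 x] that unfolding a1_b1_a2_b2_def by simp
    then have "a1 * fu x < b1 * fq x" using pos posu posq by (simp add: field_simps)
    then have "vq * vu * (a1 * fu x) \<le> vq * vu * (b1 * fq x)" using vq vu by simp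
    then have "0 \<le> (b1 * vu * vq * fq x - vq * a1 * vu * fu x) / (vq * a1 + b1 * vu)"
      using D1 by (simp add: algebra_simps)
    also have "\<dots> = h x"
    proof -
      define D where "D = vq * a1 + b1 * vu"
      have Dn: "D \<noteq> 0" using D1 by (simp add: D_def)
      have om1: "1 - \<pi>1 = vq * a1 / D" unfolding p1 D_def[symmetric] using Dn
        by (simp add: field_simps D_def)
      have "h x = \<pi>1 * vq * fq x - (vq * a1 / D) * vu * fu x"
        unfolding h_def by (simp add: om1)
      also have "\<dots> = (b1 * vu / D) * vq * fq x - (vq * a1 / D) * vu * fu x"
        by (simp add: p1 D_def)
      also have "\<dots> = (b1 * vu * vq * fq x - vq * a1 * vu * fu x) / D"
        by (simp add: diff_divide_distrib)
      finally show ?thesis by (simp add: D_def)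
    qed
    finally show ?thesis .
  qed
  have F1: "\<pi>1 * vq * cdf_of fq \<theta>1 + (- ((1 - \<pi>1) * vu)) * cdf_of fu \<theta>1
         \<le> \<pi>1 * vq * cdf_of fq \<theta>2 + (- ((1 - \<pi>1) * vu)) * cdf_of fu \<theta>2"
    unfolding lin_cdf[OF dq du]
  proof (rule integral_mono)
    show "integrable lborel (\<lambda>x. (\<pi>1 * vq * fq x + - ((1 - \<pi>1) * vu) * fu x) * indicator {..\<theta>1} x)"
      by (rule int_lin[OF dq du])
    show "integrable lborel (\<lambda>x. (\<pi>1 * vq * fq x + - ((1 - \<pi>1) * vu) * fu x) * indicator {..\<theta>2} x)"
      by (rule int_lin[OF dq du])
    fix x
    show "(\<pi>1 * vq * fq x + - ((1 - \<pi>1) * vu) * fu x) * indicator {..\<theta>1} x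
       \<le> (\<pi>1 * vq * fq x + - ((1 - \<pi>1) * vu) * fu x) * indicator {..\<theta>2} x"
      using hnn[of x] th unfolding h_def by (auto split: split_indicator)
  qed
  define Q1 U1 Q2 U2 where "Q1 = cdf_of fq \<theta>1" "U1 = cdf_of fu \<theta>1" "Q2 = cdf_of fq \<theta>2" "U2 = cdf_of fu \<theta>2"
  have bnd: "Q2 \<le> 1" "U2 \<le> 1" using cdf_bounds[OF dq] cdf_bounds[OF du] by (auto simp: Q1_U1_Q2_U2_def)
  have U12: "U1 \<le> U2" using cdf_mono[OF du] th by (simp add: Q1_U1_Q2_U2_def)
  have fo: "Q2 \<le> U2" "Q1 \<le> U1" using fosd[OF dq du posq posu mlr] by (auto simp: Q1_U1_Q2_U2_def)
  define c1 c2 where [simp del]: "c1 = \<omega> * (U1 - Q1)" "c2 = \<omega> * (U2 - Q2)"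
  have c2nn: "c2 \<ge> 0" using fo om by (simp add: c1_c2_def)
  have g1: "\<pi>1 = min 1 ((c1 - cl) / (ch - cl))"
    using eq1 by (simp add: is_equilibrium_def Gcost_def ctilde_def c1_c2_def Q1_U1_Q2_U2_def)
  have g2: "\<pi>2 = min 1 ((c2 - cl) / (ch - cl))"
    using eq2 by (simp add: is_equilibrium_def Gcost_def ctilde_def c1_c2_def Q1_U1_Q2_U2_def)
  have c1e: "c1 = (1 - \<pi>1) * cl + \<pi>1 * ch"
  proof -
    have "\<pi>1 = (c1 - cl) / (ch - cl)" using g1 pr1 by (auto simp: min_def split: if_splits)
    then show ?thesis using cc by (simp add: field_simps)
  qed
  have c2e: "c2 = (1 - \<pi>2) * cl + \<pi>2 * ch"
  proof -
    have "\<pi>2 = (c2 - cl) / (ch - cl)" using g2 pr2 by (auto simp: min_def split: if_splits)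
    then show ?thesis using cc by (simp add: field_simps)
  qed
  have cdiff: "c1 - c2 = (\<pi>1 - \<pi>2) * (ch - cl)" using c1e c2e by (simp add: algebra_simps)
  have c12: "c2 < c1"
  proof -
    have "0 < (\<pi>1 - \<pi>2) * (ch - cl)" using gt cc by simp
    then show ?thesis using cdiff by linarith
  qed
  have cl1: "cl \<le> c1" "cl \<le> c2"
  proof -
    have "0 \<le> \<pi>1 * (ch - cl)" "0 \<le> \<pi>2 * (ch - cl)" using pr1 pr2 cc by auto
    then show "cl \<le> c1" "cl \<le> c2" using c1e c2e by (auto simp: algebra_simps)
  qed
  have I1: "integral {cl..(1 - \<pi>1) * cl + \<pi>1 * ch} (\<lambda>c. c) = (c1^2 - cl^2) / 2"
    using integral_ident[of cl c1] cl1 c1e by simp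
  have I2: "integral {cl..(1 - \<pi>2) * cl + \<pi>2 * ch} (\<lambda>c. c) = (c2^2 - cl^2) / 2"
    using integral_ident[of cl c2] cl1 c2e by simp
  have S5: "c2^2 < c1^2" using c12 c2nn by (simp add: power_strict_mono)
  have S4: "\<pi>2 * c2 \<le> \<pi>1 * c1"
  proof -
    have "\<pi>2 * c2 \<le> \<pi>2 * c1" using c12 pr2 by simp
    also have "\<dots> \<le> \<pi>1 * c1" using gt c12 c2nn by (intro mult_right_mono) auto
    finally show ?thesis .
  qed
  have F2: "0 \<le> (\<pi>1 - \<pi>2) * (vq * (1 - Q2) + vu * (1 - U2))"
    using gt bnd vq vu by (intro mult_nonneg_nonneg add_nonneg_nonneg) auto
  have S3: "\<omega> * (1 - U2) \<le> \<omega> * (1 - U1)" using U12 om by simp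
  have F1': "\<pi>1 * vq * Q1 - (1 - \<pi>1) * vu * U1 \<le> \<pi>1 * vq * Q2 - (1 - \<pi>1) * vu * U2"
    using F1 by (simp add: Q1_U1_Q2_U2_def)
  have SWe: "SW vq vu \<omega> cl ch fq fu \<theta> \<pi> = \<pi> * (1 - cdf_of fq \<theta>) * vq - (1 - \<pi>) * (1 - cdf_of fu \<theta>) * vu
      + (\<omega> * (1 - cdf_of fu \<theta>) + \<pi> * (\<omega> * (cdf_of fu \<theta> - cdf_of fq \<theta>)))
      + integral {cl .. (1 - \<pi>) * cl + \<pi> * ch} (\<lambda>c. c)" for \<theta> \<pi>
    unfolding SW_def FW_def AW_def by (simp add: algebra_simps)
  show ?thesis
  proof -
    have e1: "\<pi>1 * (1 - Q1) * vq - (1 - \<pi>1) * (1 - U1) * vu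
       = \<pi>1 * vq - (1 - \<pi>1) * vu - (\<pi>1 * vq * Q1 - (1 - \<pi>1) * vu * U1)"
      by (simp add: algebra_simps)
    have e2: "\<pi>2 * (1 - Q2) * vq - (1 - \<pi>2) * (1 - U2) * vu
       = \<pi>1 * vq - (1 - \<pi>1) * vu - (\<pi>1 * vq * Q2 - (1 - \<pi>1) * vu * U2)
         - (\<pi>1 - \<pi>2) * (vq * (1 - Q2) + vu * (1 - U2))"
      by (simp add: algebra_simps)
    have E: "\<pi>2 * (1 - Q2) * vq - (1 - \<pi>2) * (1 - U2) * vu \<le> \<pi>1 * (1 - Q1) * vq - (1 - \<pi>1) * (1 - U1) * vu"
      unfolding e1 e2 using F1' F2 by linarith
    show ?thesis unfolding SWe I1 I2 Q1_U1_Q2_U2_def[symmetric] c1_c2_def[symmetric]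
      by (rule final_step[OF E S3 S4 S5])
  qed
qed
end
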